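(* Let $\mathcal{A}$ be a deterministic, singly-initiated, event-driven distributed protocol that correctly identifies the bridges of every connected graph. Then for every connected graph $G=(V,E)$, the execution of $\mathcal{A}$ on $G$ sends at least $|E|$ messages and takes at least $\mathrm{Diam}(G)/2$ time.
   Context: Network model: a connected undirected graph $G=(V,E)$ whose nodes are processors and whose edges are two-way communication links; each node initially knows only its own identity and its incident links (not the rest of the graph). Singly-initiated means exactly one node begins computing spontaneously; event-driven means every other node performs no action (in particular sends no message) before it has received a message. An edge is a bridge if its deletion disconnects $G$. "Correctly identifies the bridges" means that at termination every edge has been correctly classified as a bridge or non-bridge. $\mathrm{Diam}(G)$ is the maximum distance between two vertices of $G$; time is measured in synchronous rounds. *)

theory Defs
  imports Complex_Main
begin

text \<open>A graph on vertex set V (vertex names are natural numbers, which also serve as the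
  unique processor identities) with edge set E (each edge a 2-element subset of V).\<close>

definition simple_graph :: "nat set \<Rightarrow> nat set set \<Rightarrow> bool" where
  "simple_graph V E \<longleftrightarrow> finite V \<and> V \<noteq> {} \<and>
     (\<forall>e\<in>E. \<exists>u v. e = {u, v} \<and> u \<noteq> v \<and> u \<in> V \<and> v \<in> V)"

definition adjrel :: "nat set set \<Rightarrow> (nat \<times> nat) set" where
  "adjrel E = {(u, v). {u, v} \<in> E}"

definition connected_graph :: "nat set \<Rightarrow> nat set set \<Rightarrow> bool" where
  "connected_graph V E \<longleftrightarrow> (\<forall>u\<in>V. \<forall>v\<in>V. (u, v) \<in> (adjrel E)\<^sup>*)"

definition is_bridge :: "nat set \<Rightarrow> nat set set \<Rightarrow> nat set \<Rightarrow> bool" where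
  "is_bridge V E e \<longleftrightarrow> e \<in> E \<and> \<not> connected_graph V (E - {e})"

definition gdist :: "nat set set \<Rightarrow> nat \<Rightarrow> nat \<Rightarrow> nat" where
  "gdist E u v = (LEAST n. (u, v) \<in> (adjrel E) ^^ n)"

definition diam :: "nat set \<Rightarrow> nat set set \<Rightarrow> nat" where
  "diam V E = Max {gdist E u v | u v. u \<in> V \<and> v \<in> V}"

definition deg :: "nat set set \<Rightarrow> nat \<Rightarrow> nat" where
  "deg E v = card {w. {v, w} \<in> E}"

text \<open>Port numbering: node v knows its incident links only as local ports 0..deg v - 1
  (it does not know the identities of its neighbours); nbr v p is the neighbour at the
  other end of port p of v.\<close>

definition valid_ports :: "nat set \<Rightarrow> nat set set \<Rightarrow> (nat \<Rightarrow> nat \<Rightarrow> nat) \<Rightarrow> bool" where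
  "valid_ports V E nbr \<longleftrightarrow> (\<forall>v\<in>V. bij_betw (nbr v) {..<deg E v} {w. {v, w} \<in> E})"

definition bport :: "nat set set \<Rightarrow> (nat \<Rightarrow> nat \<Rightarrow> nat) \<Rightarrow> nat \<Rightarrow> nat \<Rightarrow> nat" where
  "bport E nbr w q = (THE p. p < deg E (nbr w q) \<and> nbr (nbr w q) p = w)"

text \<open>A deterministic protocol: initial local state from (own identity, degree);
  a step function mapping current state and the messages received this round (one optional
  message per port) to the new state and the messages to send (one optional message per port);
  the node_output register (classification of each port as bridge / non-bridge, None = not node_output);
  and a halting predicate.\<close>

datatype ('s, 'm) protocol = Protocol
  (p_init: "nat \<Rightarrow> nat \<Rightarrow> 's")
  (p_step: "'s \<Rightarrow> (nat \<Rightarrow> 'm option) \<Rightarrow> 's \<times> (nat \<Rightarrow> 'm option)")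
  (p_out: "'s \<Rightarrow> nat \<Rightarrow> bool option")
  (p_halted: "'s \<Rightarrow> bool")

definition deliver :: "nat set \<Rightarrow> nat set set \<Rightarrow> (nat \<Rightarrow> nat \<Rightarrow> nat)
    \<Rightarrow> (nat \<Rightarrow> nat \<Rightarrow> 'm option) \<Rightarrow> nat \<Rightarrow> nat \<Rightarrow> 'm option" where
  "deliver V E nbr sends = (\<lambda>w q. if w \<in> V \<and> q < deg E w then sends (nbr w q) (bport E nbr w q) else None)"

text \<open>A node acts in a round iff it is awake and not halted, or it is asleep and receives a
  message (event-driven: a non-initiator does nothing before its first message).\<close>
definition acts :: "('s, 'm) protocol \<Rightarrow> nat set set \<Rightarrow> (nat \<Rightarrow> 's option)
    \<Rightarrow> (nat \<Rightarrow> nat \<Rightarrow> 'm option) \<Rightarrow> nat \<Rightarrow> bool" where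
  "acts P E st inb v = (case st v of None \<Rightarrow> (\<exists>q<deg E v. inb v q \<noteq> None)
                                   | Some s \<Rightarrow> \<not> p_halted P s)"

definition cur :: "('s, 'm) protocol \<Rightarrow> nat set set \<Rightarrow> (nat \<Rightarrow> 's option) \<Rightarrow> nat \<Rightarrow> 's" where
  "cur P E st v = (case st v of None \<Rightarrow> p_init P v (deg E v) | Some s \<Rightarrow> s)"

definition inbox :: "nat set set \<Rightarrow> (nat \<Rightarrow> nat \<Rightarrow> 'm option) \<Rightarrow> nat \<Rightarrow> nat \<Rightarrow> 'm option" where
  "inbox E inb v = (\<lambda>q. if q < deg E v then inb v q else None)"

text \<open>Configuration after round t: local states (None = asleep, never acted) and messages in
  transit (to be received at round t+1).  Round 0: the unique initiator r wakes up spontaneously.\<close>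
primrec exec :: "('s, 'm) protocol \<Rightarrow> nat set \<Rightarrow> nat set set \<Rightarrow> (nat \<Rightarrow> nat \<Rightarrow> nat) \<Rightarrow> nat
    \<Rightarrow> nat \<Rightarrow> (nat \<Rightarrow> 's option) \<times> (nat \<Rightarrow> nat \<Rightarrow> 'm option)" where
  "exec P V E nbr r 0 =
     (let res = p_step P (p_init P r (deg E r)) (\<lambda>_. None) in
       ((\<lambda>v. if v = r then Some (fst res) else None),
        deliver V E nbr (\<lambda>v p. if v = r \<and> p < deg E r then snd res p else None)))"
| "exec P V E nbr r (Suc t) =
     (let cfg = exec P V E nbr r t; st = fst cfg; inb = snd cfg;
          res = (\<lambda>v. p_step P (cur P E st v) (inbox E inb v));
          act = (\<lambda>v. v \<in> V \<and> acts P E st inb v) in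
       ((\<lambda>v. if act v then Some (fst (res v)) else st v),
        deliver V E nbr (\<lambda>v p. if act v \<and> p < deg E v then snd (res v) p else None)))"

text \<open>Termination: all awake nodes have halted and no message is in transit
  (afterwards nothing changes any more).\<close>
definition terminated :: "('s, 'm) protocol \<Rightarrow> nat set \<Rightarrow> nat set set \<Rightarrow> (nat \<Rightarrow> nat \<Rightarrow> nat)
    \<Rightarrow> nat \<Rightarrow> nat \<Rightarrow> bool" where
  "terminated P V E nbr r t \<longleftrightarrow>
     (\<forall>v\<in>V. \<forall>s. fst (exec P V E nbr r t) v = Some s \<longrightarrow> p_halted P s) \<and>
     (\<forall>w\<in>V. \<forall>q<deg E w. snd (exec P V E nbr r t) w q = None)"

definition term_time :: "('s, 'm) protocol \<Rightarrow> nat set \<Rightarrow> nat set set \<Rightarrow> (nat \<Rightarrow> nat \<Rightarrow> nat)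
    \<Rightarrow> nat \<Rightarrow> nat" where
  "term_time P V E nbr r = (LEAST t. terminated P V E nbr r t)"

text \<open>Number of messages sent in round t (= in transit after round t).\<close>
definition msgs_at :: "('s, 'm) protocol \<Rightarrow> nat set \<Rightarrow> nat set set \<Rightarrow> (nat \<Rightarrow> nat \<Rightarrow> nat)
    \<Rightarrow> nat \<Rightarrow> nat \<Rightarrow> nat" where
  "msgs_at P V E nbr r t =
     card {(w, q). w \<in> V \<and> q < deg E w \<and> snd (exec P V E nbr r t) w q \<noteq> None}"

definition msg_count :: "('s, 'm) protocol \<Rightarrow> nat set \<Rightarrow> nat set set \<Rightarrow> (nat \<Rightarrow> nat \<Rightarrow> nat)
    \<Rightarrow> nat \<Rightarrow> nat" where
  "msg_count P V E nbr r = (\<Sum>t\<le>term_time P V E nbr r. msgs_at P V E nbr r t)"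

definition node_output :: "('s, 'm) protocol \<Rightarrow> nat set \<Rightarrow> nat set set \<Rightarrow> (nat \<Rightarrow> nat \<Rightarrow> nat)
    \<Rightarrow> nat \<Rightarrow> nat \<Rightarrow> nat \<Rightarrow> nat \<Rightarrow> bool option" where
  "node_output P V E nbr r t v p =
     (case fst (exec P V E nbr r t) v of None \<Rightarrow> None | Some s \<Rightarrow> p_out P s p)"

definition correctly_classified :: "('s, 'm) protocol \<Rightarrow> nat set \<Rightarrow> nat set set
    \<Rightarrow> (nat \<Rightarrow> nat \<Rightarrow> nat) \<Rightarrow> nat \<Rightarrow> nat \<Rightarrow> bool" where
  "correctly_classified P V E nbr r t \<longleftrightarrow>
     (\<forall>v\<in>V. \<forall>p<deg E v. node_output P V E nbr r t v p = Some (is_bridge V E {v, nbr v p}))"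

definition identifies_bridges :: "('s, 'm) protocol \<Rightarrow> bool" where
  "identifies_bridges P \<longleftrightarrow>
     (\<forall>V E nbr r. simple_graph V E \<and> connected_graph V E \<and> valid_ports V E nbr \<and> r \<in> V \<longrightarrow>
        (\<exists>t. terminated P V E nbr r t) \<and>
        correctly_classified P V E nbr r (term_time P V E nbr r))"

end

theory Submission
  imports Defs
begin

lemma edge_in_V:
  assumes "simple_graph V E" "{u, v} \<in> E"
  shows "u \<in> V \<and> v \<in> V \<and> u \<noteq> v"
proof -
  obtain a b where "{u,v} = {a,b}" "a \<noteq> b" "a \<in> V" "b \<in> V"
    using assms unfolding simple_graph_def by blast
  then show ?thesis by (metis doubleton_eq_iff)
qed

lemma port_edge:
  assumes "valid_ports V E nbr" "w \<in> V" "q < deg E w"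
  shows "{w, nbr w q} \<in> E"
  using assms unfolding valid_ports_def bij_betw_def by auto

lemma bport_char:
  assumes sg: "simple_graph V E" and vp: "valid_ports V E nbr" and w: "w \<in> V" and q: "q < deg E w"
  shows "bport E nbr w q < deg E (nbr w q) \<and> nbr (nbr w q) (bport E nbr w q) = w"
    and "p < deg E (nbr w q) \<Longrightarrow> nbr (nbr w q) p = w \<Longrightarrow> bport E nbr w q = p"
proof -
  define u where "u = nbr w q"
  have e: "{w, u} \<in> E" using port_edge[OF vp w q] u_def by simp
  hence uV: "u \<in> V" using edge_in_V[OF sg] by blast
  have e2: "{u, w} \<in> E" using e by (simp add: insert_commute)
  have bij: "bij_betw (nbr u) {..<deg E u} {z. {u, z} \<in> E}" using vp uV unfolding valid_ports_def by blast
  have "w \<in> nbr u ` {..<deg E u}" using bij e2 unfolding bij_betw_def by simp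
  then obtain p0 where p0: "p0 < deg E u" "nbr u p0 = w" by auto
  have inj: "inj_on (nbr u) {..<deg E u}" using bij unfolding bij_betw_def by simp
  have uniq: "\<And>p. p < deg E u \<Longrightarrow> nbr u p = w \<Longrightarrow> p = p0"
    using inj p0 unfolding inj_on_def by simp
  have ex1: "\<exists>!p. p < deg E u \<and> nbr u p = w" using p0 uniq by blast
  have "(THE p. p < deg E u \<and> nbr u p = w) = p0" by (rule the1_equality[OF ex1]) (simp add: p0)
  hence bp: "bport E nbr w q = p0" unfolding bport_def u_def by simp
  show "bport E nbr w q < deg E (nbr w q) \<and> nbr (nbr w q) (bport E nbr w q) = w"
    using bp p0 u_def by simp
  show "p < deg E (nbr w q) \<Longrightarrow> nbr (nbr w q) p = w \<Longrightarrow> bport E nbr w q = p"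
    using bp uniq u_def by simp
qed

lemma awake_reach:
  assumes vp: "valid_ports V E nbr"
  shows "(\<forall>v. fst (exec P V E nbr r t) v \<noteq> None \<longrightarrow> (\<exists>n\<le>t. (r, v) \<in> adjrel E ^^ n)) \<and>
         (\<forall>w q. snd (exec P V E nbr r t) w q \<noteq> None \<longrightarrow> fst (exec P V E nbr r t) (nbr w q) \<noteq> None)"
proof (induction t)
  case 0
  define res where "res = p_step P (p_init P r (deg E r)) (\<lambda>_. None)"
  define S where "S = (\<lambda>v p. if v = r \<and> p < deg E r then snd res p else None)"
  have ex: "exec P V E nbr r 0 = ((\<lambda>v. if v = r then Some (fst res) else None), deliver V E nbr S)"
    unfolding res_def S_def by (simp add: Let_def)
  have C2: "nbr w q = r" if "deliver V E nbr S w q \<noteq> None" for w q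
  proof -
    have "S (nbr w q) (bport E nbr w q) \<noteq> None" using that unfolding deliver_def by (simp split: if_splits)
    then show ?thesis unfolding S_def by (simp split: if_splits)
  qed
  have C1: "(r, v) \<in> adjrel E ^^ 0" if "(if v = r then Some (fst res) else None) \<noteq> None" for v
    using that by (simp split: if_splits)
  show ?case unfolding ex fst_conv snd_conv using C1 C2 by auto
next
  case (Suc t)
  define st where "st = fst (exec P V E nbr r t)"
  define inb where "inb = snd (exec P V E nbr r t)"
  have IH1: "\<And>v. st v \<noteq> None \<Longrightarrow> \<exists>n\<le>t. (r, v) \<in> adjrel E ^^ n"
    unfolding st_def by (rule conjunct1[OF Suc.IH, rule_format])
  have IH2: "\<And>w q. inb w q \<noteq> None \<Longrightarrow> st (nbr w q) \<noteq> None"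
    unfolding st_def inb_def by (rule conjunct2[OF Suc.IH, rule_format])
  have A: "\<exists>n\<le>Suc t. (r, v) \<in> adjrel E ^^ n" if vV: "v \<in> V" and ac: "acts P E st inb v" for v
  proof (cases "st v")
    case None
    then obtain q where q: "q < deg E v" "inb v q \<noteq> None" using ac None unfolding acts_def by auto
    obtain n where n: "n \<le> t" "(r, nbr v q) \<in> adjrel E ^^ n" using IH1 IH2[OF q(2)] by blast
    have "{nbr v q, v} \<in> E" using port_edge[OF vp vV q(1)] by (simp add: insert_commute)
    hence "(nbr v q, v) \<in> adjrel E" unfolding adjrel_def by simp
    hence rv: "(r, v) \<in> adjrel E ^^ Suc n" by (rule relpow_Suc_I[OF n(2)])
    have "Suc n \<le> Suc t" using n(1) by simp
    then show ?thesis using rv by blast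
  next
    case (Some s)
    then obtain n where "n \<le> t" "(r, v) \<in> adjrel E ^^ n" using IH1 by blast
    then show ?thesis by (intro exI[of _ n]) simp
  qed
  define act where "act = (\<lambda>v. v \<in> V \<and> acts P E st inb v)"
  define res where "res = (\<lambda>v. p_step P (cur P E st v) (inbox E inb v))"
  define S where "S = (\<lambda>v p. if act v \<and> p < deg E v then snd (res v) p else None)"
  have ex: "exec P V E nbr r (Suc t) = ((\<lambda>v. if act v then Some (fst (res v)) else st v), deliver V E nbr S)"
    unfolding st_def inb_def act_def res_def S_def by (simp add: Let_def)
  have C1: "\<exists>n\<le>Suc t. (r, v) \<in> adjrel E ^^ n" if "(if act v then Some (fst (res v)) else st v) \<noteq> None" for v
  proof (cases "act v")
    case True
    then show ?thesis using A unfolding act_def by blast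
  next
    case False
    then have "st v \<noteq> None" using that by simp
    then obtain n where "n \<le> t" "(r, v) \<in> adjrel E ^^ n" using IH1 by blast
    then show ?thesis by (intro exI[of _ n]) simp
  qed
  have C2: "(if act (nbr w q) then Some (fst (res (nbr w q))) else st (nbr w q)) \<noteq> None"
    if "deliver V E nbr S w q \<noteq> None" for w q
  proof -
    have "S (nbr w q) (bport E nbr w q) \<noteq> None" using that unfolding deliver_def by (simp split: if_splits)
    hence "act (nbr w q)" unfolding S_def by (simp split: if_splits)
    then show ?thesis by simp
  qed
  show ?case unfolding ex fst_conv snd_conv
  proof (intro conjI allI impI)
    fix v assume "(if act v then Some (fst (res v)) else st v) \<noteq> None"
    then show "\<exists>n\<le>Suc t. (r, v) \<in> adjrel E ^^ n" by (rule C1)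
  next
    fix w q assume "deliver V E nbr S w q \<noteq> None"
    then show "(if act (nbr w q) then Some (fst (res (nbr w q))) else st (nbr w q)) \<noteq> None" by (rule C2)
  qed
qed


lemma relpow_sym:
  assumes "(x, y) \<in> adjrel E ^^ n"
  shows "(y, x) \<in> adjrel E ^^ n"
  using assms
proof (induction n arbitrary: y)
  case 0
  then show ?case by simp
next
  case (Suc n)
  then obtain z where z: "(x, z) \<in> adjrel E ^^ n" "(z, y) \<in> adjrel E" by auto
  have "(y, z) \<in> adjrel E" using z(2) unfolding adjrel_def by (simp add: insert_commute)
  then show ?case by (rule relpow_Suc_I2[OF _ Suc.IH[OF z(1)]])
qed

lemma deg_pos:
  assumes sg: "simple_graph V E" and cg: "connected_graph V E" and r: "r \<in> V"
    and v: "v \<in> V" "v \<noteq> r"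
  shows "0 < deg E v"
proof -
  have "(r, v) \<in> (adjrel E)\<^sup>*" using cg r v unfolding connected_graph_def by blast
  then obtain w where "(w, v) \<in> adjrel E" using v(2) by (metis rtranclE)
  hence w: "{v, w} \<in> E" unfolding adjrel_def by (simp add: insert_commute)
  have "{z. {v, z} \<in> E} \<subseteq> V" using edge_in_V[OF sg] by blast
  hence "finite {z. {v, z} \<in> E}" using sg unfolding simple_graph_def using finite_subset by blast
  moreover have "w \<in> {z. {v, z} \<in> E}" using w by simp
  ultimately show ?thesis unfolding deg_def by (metis card_gt_0_iff empty_iff)
qed

lemma time_bound:
  assumes ib: "identifies_bridges P"
    and sg: "simple_graph V E" and cg: "connected_graph V E" and vp: "valid_ports V E nbr" and r: "r \<in> V"
  shows "real (diam V E) / 2 \<le> real (term_time P V E nbr r)"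
proof -
  define T where "T = term_time P V E nbr r"
  have cc: "correctly_classified P V E nbr r T" using ib sg cg vp r unfolding identifies_bridges_def T_def by blast
  have reach: "\<exists>n\<le>T. (r, v) \<in> adjrel E ^^ n" if vV: "v \<in> V" for v
  proof (cases "v = r")
    case True
    then show ?thesis by (intro exI[of _ 0]) auto
  next
    case False
    have "0 < deg E v" using deg_pos[OF sg cg r vV False] .
    hence "node_output P V E nbr r T v 0 = Some (is_bridge V E {v, nbr v 0})"
      using cc vV unfolding correctly_classified_def by blast
    hence "fst (exec P V E nbr r T) v \<noteq> None" unfolding node_output_def by (auto split: option.splits)
    then show ?thesis using awake_reach[OF vp, of P r T] by blast
  qed
  have gd: "gdist E u v \<le> 2 * T" if uV: "u \<in> V" and vV: "v \<in> V" for u v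
  proof -
    obtain n1 where n1: "n1 \<le> T" "(r, u) \<in> adjrel E ^^ n1" using reach[OF uV] by blast
    obtain n2 where n2: "n2 \<le> T" "(r, v) \<in> adjrel E ^^ n2" using reach[OF vV] by blast
    have "(u, v) \<in> adjrel E ^^ (n1 + n2)" unfolding relpow_add using relpow_sym[OF n1(2)] n2(2) by blast
    hence "gdist E u v \<le> n1 + n2" unfolding gdist_def by (rule Least_le)
    then show ?thesis using n1 n2 by simp
  qed
  have eq: "{gdist E u v | u v. u \<in> V \<and> v \<in> V} = (\<lambda>(u, v). gdist E u v) ` (V \<times> V)" by auto
  have fin: "finite {gdist E u v | u v. u \<in> V \<and> v \<in> V}" unfolding eq using sg unfolding simple_graph_def by simp
  have ne: "{gdist E u v | u v. u \<in> V \<and> v \<in> V} \<noteq> {}" using r by blast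
  have "diam V E \<le> 2 * T" unfolding diam_def using fin ne gd by (subst Max_le_iff) auto
  then show ?thesis unfolding T_def by simp
qed


lemma snd_exec_V:
  assumes "snd (exec P V E nbr r t) w q \<noteq> None"
  shows "w \<in> V \<and> q < deg E w"
  using assms by (cases t) (auto simp: Let_def deliver_def split: if_splits)

lemma awake_in_V:
  assumes "r \<in> V"
  shows "fst (exec P V E nbr r t) v \<noteq> None \<Longrightarrow> v \<in> V"
  using assms by (induction t arbitrary: v) (auto simp: Let_def split: if_splits)

lemma bij_upd:
  assumes "bij_betw f A B" "p \<in> A" "y \<notin> B"
  shows "bij_betw (f(p := y)) A (insert y (B - {f p}))"
  using assms unfolding bij_betw_def inj_on_def by (auto simp: image_iff) 

lemma card_swap:
  assumes "finite S" "b \<in> S" "x \<notin> S"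
  shows "card (insert x (S - {b})) = card S"
proof -
  have "card (insert x (S - {b})) = Suc (card (S - {b}))" using assms by simp
  also have "card (S - {b}) = card S - 1" using assms by (simp add: card_Diff_singleton)
  also have "0 < card S" using assms card_gt_0_iff by blast
  then have "Suc (card S - 1) = card S" by simp
  finally show ?thesis .
qed

locale subdiv =
  fixes P :: "('s, 'm) protocol" and V E nbr r a b pa pb x
  assumes sg: "simple_graph V E" and cg: "connected_graph V E" and vp: "valid_ports V E nbr"
    and rV: "r \<in> V" and ab: "{a, b} \<in> E"
    and pa: "pa < deg E a" "nbr a pa = b" and pb: "pb < deg E b" "nbr b pb = a"
    and xV: "x \<notin> V"
begin

definition "V' = insert x V"
definition "E' = (E - {{a, b}}) \<union> {{a, x}, {x, b}}"
definition "nbr' = (\<lambda>w q. if w = x then (if q = 0 then a else b)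
   else if w = a \<and> q = pa then x else if w = b \<and> q = pb then x else nbr w q)"

lemma abV: "a \<in> V" "b \<in> V" "a \<noteq> b" using edge_in_V[OF sg ab] by auto
lemma ax: "a \<noteq> x" "b \<noteq> x" using abV xV by auto

lemma nbrs_x: "{z. {x, z} \<in> E'} = {a, b}"
  using xV ax abV edge_in_V[OF sg] unfolding E'_def by (auto simp: doubleton_eq_iff)

lemma nbrs_a: "{z. {a, z} \<in> E'} = insert x ({z. {a, z} \<in> E} - {b})"
  using xV ax abV edge_in_V[OF sg] unfolding E'_def by (auto simp: doubleton_eq_iff)

lemma nbrs_b: "{z. {b, z} \<in> E'} = insert x ({z. {b, z} \<in> E} - {a})"
  using xV ax abV edge_in_V[OF sg] unfolding E'_def by (auto simp: doubleton_eq_iff insert_commute)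

lemma nbrs_o: "w \<noteq> a \<Longrightarrow> w \<noteq> b \<Longrightarrow> w \<noteq> x \<Longrightarrow> {z. {w, z} \<in> E'} = {z. {w, z} \<in> E}"
  using xV ax abV edge_in_V[OF sg] unfolding E'_def by (auto simp: doubleton_eq_iff)

lemma fin_nbrs: "finite {z. {w, z} \<in> E}"
proof -
  have "{z. {w, z} \<in> E} \<subseteq> V" using edge_in_V[OF sg] by blast
  then show ?thesis using sg unfolding simple_graph_def using finite_subset by blast
qed

lemma deg_x: "deg E' x = 2"
  unfolding deg_def nbrs_x using abV by simp

lemma deg_V: assumes "w \<in> V" shows "deg E' w = deg E w"
proof -
  have bE: "b \<in> {z. {a, z} \<in> E}" using ab by simp
  have aE: "a \<in> {z. {b, z} \<in> E}" using ab by (simp add: insert_commute)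
  have xa: "x \<notin> {z. {w, z} \<in> E}" for w using xV edge_in_V[OF sg] by blast
  show ?thesis
  proof (cases "w = a")
    case True
    show ?thesis unfolding deg_def True nbrs_a by (rule card_swap[OF fin_nbrs[of a] bE xa[of a]])
  next
    case F1: False
    show ?thesis
    proof (cases "w = b")
      case True
      show ?thesis unfolding deg_def True nbrs_b by (rule card_swap[OF fin_nbrs[of b] aE xa[of b]])
    next
      case False
      have "w \<noteq> x" using assms xV by auto
      show ?thesis unfolding deg_def nbrs_o[OF F1 False \<open>w \<noteq> x\<close>] by (rule refl)
    qed
  qed
qed


lemma vp': "valid_ports V' E' nbr'"
  unfolding valid_ports_def
proof
  fix w assume w: "w \<in> V'"
  show "bij_betw (nbr' w) {..<deg E' w} {z. {w, z} \<in> E'}"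
  proof (cases "w = x")
    case True
    have "nbr' x = (\<lambda>q. if q = 0 then a else b)" unfolding nbr'_def by auto
    moreover have "{..<2::nat} = {0, 1}" by auto
    ultimately show ?thesis unfolding True deg_x nbrs_x using abV
      by (auto simp: bij_betw_def inj_on_def)
  next
    case Fx: False
    hence wV: "w \<in> V" using w unfolding V'_def by simp
    have bij: "bij_betw (nbr w) {..<deg E w} {z. {w, z} \<in> E}" using vp wV unfolding valid_ports_def by blast
    have xn: "x \<notin> {z. {w, z} \<in> E}" using xV edge_in_V[OF sg] by blast
    show ?thesis
    proof (cases "w = a")
      case True
      have "nbr' w = (nbr a)(pa := x)" unfolding nbr'_def True using ax abV by auto
      then show ?thesis unfolding deg_V[OF wV] using bij_upd[of "nbr a" "{..<deg E a}" _ pa x] bij pa xn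
        unfolding True nbrs_a by simp
    next
      case Fa: False
      show ?thesis
      proof (cases "w = b")
        case True
        have "nbr' w = (nbr b)(pb := x)" unfolding nbr'_def True using ax abV by auto
        then show ?thesis unfolding deg_V[OF wV] using bij_upd[of "nbr b" "{..<deg E b}" _ pb x] bij pb xn
          unfolding True nbrs_b by simp
      next
        case False
        have "nbr' w = nbr w" unfolding nbr'_def using Fx Fa False by auto
        then show ?thesis unfolding deg_V[OF wV] nbrs_o[OF Fa False Fx] using bij by simp
      qed
    qed
  qed
qed

lemma sg': "simple_graph V' E'"
  using sg ax abV unfolding simple_graph_def V'_def E'_def by auto

lemma cg': "connected_graph V' E'"
proof -
  let ?R = "adjrel E'"
  have xa: "(x, a) \<in> ?R" "(a, x) \<in> ?R" "(x, b) \<in> ?R" "(b, x) \<in> ?R"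
    unfolding adjrel_def E'_def by (auto simp: insert_commute)
  have "adjrel E \<subseteq> ?R\<^sup>*"
  proof
    fix p assume "p \<in> adjrel E"
    then obtain u v where p: "p = (u, v)" "{u, v} \<in> E" unfolding adjrel_def by auto
    show "p \<in> ?R\<^sup>*"
    proof (cases "{u, v} = {a, b}")
      case True
      hence "(u = a \<and> v = b) \<or> (u = b \<and> v = a)" by (auto simp: doubleton_eq_iff)
      then show ?thesis using xa p by (meson converse_rtrancl_into_rtrancl r_into_rtrancl)
    next
      case False
      then have "(u, v) \<in> ?R" using p unfolding adjrel_def E'_def by auto
      then show ?thesis using p by auto
    qed
  qed
  hence sub: "(adjrel E)\<^sup>* \<subseteq> ?R\<^sup>*" by (rule rtrancl_subset_rtrancl)
  have inV: "(u, v) \<in> ?R\<^sup>*" if uV: "u \<in> V" and vV: "v \<in> V" for u v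
    using cg that sub unfolding connected_graph_def by blast
  have xv: "(x, v) \<in> ?R\<^sup>*" "(v, x) \<in> ?R\<^sup>*" if "v \<in> V" for v
    using inV[OF abV(1) that] inV[OF that abV(1)] xa
    by (meson converse_rtrancl_into_rtrancl rtrancl.rtrancl_into_rtrancl)+
  show ?thesis unfolding connected_graph_def V'_def using inV xv by auto
qed


lemma bport_ba: "bport E nbr b pb = pa"
  using bport_char(2)[OF sg vp abV(2) pb(1), of pa] pa pb by simp

lemma bport'_x0: "bport E' nbr' x 0 = pa"
proof -
  have "nbr' x 0 = a" unfolding nbr'_def by simp
  moreover have "nbr' a pa = x" unfolding nbr'_def using ax by simp
  ultimately show ?thesis using bport_char(2)[OF sg' vp', of x 0 pa] deg_x pa deg_V[OF abV(1)]
    unfolding V'_def by simp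
qed

lemma bport'_x1: "bport E' nbr' x 1 = pb"
proof -
  have "nbr' x 1 = b" unfolding nbr'_def by simp
  moreover have "nbr' b pb = x" unfolding nbr'_def using ax abV by simp
  ultimately show ?thesis using bport_char(2)[OF sg' vp', of x 1 pb] deg_x pb deg_V[OF abV(2)]
    unfolding V'_def by simp
qed

lemma inj_port:
  assumes "w \<in> V" "q < deg E w" "p < deg E w" "nbr w q = nbr w p"
  shows "q = p"
  using vp assms unfolding valid_ports_def bij_betw_def inj_on_def by auto

lemma bport'_o:
  assumes w: "w \<in> V" and q: "q < deg E w" and na: "\<not> (w = a \<and> q = pa)" and nb: "\<not> (w = b \<and> q = pb)"
  shows "bport E' nbr' w q = bport E nbr w q" and "nbr' w q = nbr w q"
proof -
  show nw: "nbr' w q = nbr w q" unfolding nbr'_def using w xV na nb by auto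
  define u where "u = nbr w q"
  define p0 where "p0 = bport E nbr w q"
  have uV: "u \<in> V" using port_edge[OF vp w q] edge_in_V[OF sg] u_def by blast
  have p0: "p0 < deg E u" "nbr u p0 = w" using bport_char(1)[OF sg vp w q] u_def p0_def by auto
  have ux: "u \<noteq> x" using uV xV by auto
  have "nbr' u p0 = w"
  proof -
    have "\<not> (u = a \<and> p0 = pa)"
    proof
      assume h: "u = a \<and> p0 = pa"
      hence "w = b" using p0 pa by simp
      hence "nbr b q = a" using h u_def by simp
      hence "q = pb" using inj_port[OF abV(2) _ pb(1)] q pb(2) \<open>w = b\<close> by simp
      then show False using nb \<open>w = b\<close> by simp
    qed
    moreover have "\<not> (u = b \<and> p0 = pb)"
    proof
      assume h: "u = b \<and> p0 = pb"
      hence "w = a" using p0 pb by simp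
      hence "nbr a q = b" using h u_def by simp
      hence "q = pa" using inj_port[OF abV(1) _ pa(1)] q pa(2) \<open>w = a\<close> by simp
      then show False using na \<open>w = a\<close> by simp
    qed
    ultimately show ?thesis unfolding nbr'_def using ux p0 by auto
  qed
  moreover have "w \<in> V'" "q < deg E' w" using w q deg_V[OF w] unfolding V'_def by auto
  ultimately show "bport E' nbr' w q = bport E nbr w q"
    using bport_char(2)[OF sg' vp', of w q p0] nw u_def p0 deg_V[OF uV] p0_def by simp
qed

lemma deliver_eq:
  assumes Sx: "\<And>p. S x p = None" and Sa: "deliver V E nbr S a pa = None" and Sb: "deliver V E nbr S b pb = None"
  shows "deliver V' E' nbr' S = deliver V E nbr S"
proof (intro ext)
  fix w q
  have Sapa: "S a pa = None" using Sb abV pb bport_ba unfolding deliver_def by simp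
  have Sbpb: "S b pb = None" using Sa abV pa bport_char(2)[OF sg vp abV(1) pa(1), of pb] pb unfolding deliver_def by simp
  show "deliver V' E' nbr' S w q = deliver V E nbr S w q"
  proof (cases "w = x")
    case True
    have n0: "nbr' x 0 = a" and n1: "nbr' x 1 = b" unfolding nbr'_def by simp_all
    show ?thesis
    proof (cases "q < 2")
      case True
      hence "q = 0 \<or> q = 1" by auto
      moreover have "x \<in> V'" unfolding V'_def by simp
      ultimately show ?thesis unfolding deliver_def \<open>w = x\<close> using xV deg_x bport'_x0 bport'_x1 Sapa Sbpb n0 n1
        by auto
    next
      case False
      then show ?thesis unfolding deliver_def \<open>w = x\<close> using xV deg_x by simp
    qed
  next
    case Fx: False
    show ?thesis
    proof (cases "w \<in> V")
      case False
      then show ?thesis using Fx unfolding deliver_def V'_def by simp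
    next
      case wV: True
      show ?thesis
      proof (cases "q < deg E w")
        case False
        then show ?thesis unfolding deliver_def using deg_V[OF wV] by simp
      next
        case q: True
        show ?thesis
        proof (cases "(w = a \<and> q = pa) \<or> (w = b \<and> q = pb)")
          case True
          hence "nbr' w q = x" unfolding nbr'_def using ax by auto
          then show ?thesis using True Sa Sb Sx unfolding deliver_def by auto
        next
          case False
          then show ?thesis unfolding deliver_def using bport'_o[OF wV q] deg_V[OF wV] wV q
            unfolding V'_def by auto
        qed
      qed
    qed
  qed
qed


lemma sim:
  assumes quiet: "\<And>t. t \<le> T \<Longrightarrow> snd (exec P V E nbr r t) a pa = None \<and> snd (exec P V E nbr r t) b pb = None"
  shows "t \<le> T \<Longrightarrow> exec P V' E' nbr' r t = exec P V E nbr r t"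
proof (induction t)
  case 0
  define S where "S = (\<lambda>v p. if v = r \<and> p < deg E r then snd (p_step P (p_init P r (deg E r)) (\<lambda>_. None)) p else None)"
  have ex: "exec P V E nbr r 0 = ((\<lambda>v. if v = r then Some (fst (p_step P (p_init P r (deg E r)) (\<lambda>_. None))) else None), deliver V E nbr S)"
    unfolding S_def by (simp add: Let_def)
  have ex': "exec P V' E' nbr' r 0 = ((\<lambda>v. if v = r then Some (fst (p_step P (p_init P r (deg E r)) (\<lambda>_. None))) else None), deliver V' E' nbr' S)"
    unfolding S_def by (simp add: Let_def deg_V[OF rV])
  have "deliver V' E' nbr' S = deliver V E nbr S"
    apply (rule deliver_eq)
    using quiet[of 0] ex xV rV by (auto simp: S_def)
  then show ?case using ex ex' by simp
next
  case (Suc t)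
  hence IH: "exec P V' E' nbr' r t = exec P V E nbr r t" by simp
  define st where "st = fst (exec P V E nbr r t)"
  define inb where "inb = snd (exec P V E nbr r t)"
  define act where "act = (\<lambda>v. v \<in> V \<and> acts P E st inb v)"
  define act' where "act' = (\<lambda>v. v \<in> V' \<and> acts P E' st inb v)"
  define res where "res = (\<lambda>v. p_step P (cur P E st v) (inbox E inb v))"
  define res' where "res' = (\<lambda>v. p_step P (cur P E' st v) (inbox E' inb v))"
  define S where "S = (\<lambda>v p. if act v \<and> p < deg E v then snd (res v) p else None)"
  define S' where "S' = (\<lambda>v p. if act' v \<and> p < deg E' v then snd (res' v) p else None)"
  have ex: "exec P V E nbr r (Suc t) = ((\<lambda>v. if act v then Some (fst (res v)) else st v), deliver V E nbr S)"
    unfolding st_def inb_def act_def res_def S_def by (simp add: Let_def)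
  have ex': "exec P V' E' nbr' r (Suc t) = ((\<lambda>v. if act' v then Some (fst (res' v)) else st v), deliver V' E' nbr' S')"
    unfolding st_def inb_def act'_def res'_def S'_def by (simp add: Let_def IH)
  have stx: "st x = None" using awake_in_V[OF rV, of P E nbr t x] xV unfolding st_def by blast
  have inbx: "inb x q = None" for q using snd_exec_V[of P V E nbr r t x q] xV unfolding inb_def by blast
  have actx: "\<not> act' x" unfolding act'_def acts_def using stx inbx by simp
  have acteq: "act' v = act v" for v
  proof (cases "v \<in> V")
    case True
    then show ?thesis unfolding act'_def act_def acts_def V'_def using deg_V[OF True] by (cases "st v") simp_all
  next
    case False
    then show ?thesis using actx unfolding act_def act'_def V'_def by auto
  qed
  have reseq: "res' v = res v" if "v \<in> V" for v
    unfolding res'_def res_def cur_def inbox_def using deg_V[OF that] by (cases "st v") simp_all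
  have Seq: "S' = S" unfolding S'_def S_def using acteq reseq deg_V unfolding act_def by (auto intro!: ext)
  have d: "deliver V' E' nbr' S = deliver V E nbr S"
    apply (rule deliver_eq)
    using quiet[OF Suc.prems] ex actx acteq unfolding S_def by auto
  have f: "(\<lambda>v. if act' v then Some (fst (res' v)) else st v) = (\<lambda>v. if act v then Some (fst (res v)) else st v)"
    using acteq reseq unfolding act_def by (auto intro!: ext)
  show ?case unfolding ex ex' f Seq d ..
qed

lemma no_quiet:
  assumes ib: "identifies_bridges P" and T: "T = term_time P V E nbr r"
    and trm: "terminated P V E nbr r T"
    and quiet: "\<And>t. t \<le> T \<Longrightarrow> snd (exec P V E nbr r t) a pa = None \<and> snd (exec P V E nbr r t) b pb = None"
  shows False
proof -
  have simT: "\<And>t. t \<le> T \<Longrightarrow> exec P V' E' nbr' r t = exec P V E nbr r t" using sim quiet by blast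
  have trm': "terminated P V' E' nbr' r T"
    unfolding terminated_def
  proof (intro conjI ballI allI impI)
    fix v s assume v: "v \<in> V'" and s: "fst (exec P V' E' nbr' r T) v = Some s"
    hence s2: "fst (exec P V E nbr r T) v = Some s" using simT by simp
    hence "v \<in> V" using awake_in_V[OF rV] by (metis option.distinct(1))
    then show "p_halted P s" using trm s2 unfolding terminated_def by blast
  next
    fix w q assume w: "w \<in> V'" and q: "q < deg E' w"
    show "snd (exec P V' E' nbr' r T) w q = None"
    proof (cases "w \<in> V")
      case True
      then show ?thesis using trm q deg_V[OF True] simT unfolding terminated_def by simp
    next
      case False
      then show ?thesis using simT snd_exec_V by (metis order_refl)
    qed
  qed
  define T' where "T' = term_time P V' E' nbr' r"
  have "T' \<le> T" unfolding T'_def term_time_def using trm' by (rule Least_le)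
  hence simT': "exec P V' E' nbr' r T' = exec P V E nbr r T'" using simT by simp
  have "correctly_classified P V' E' nbr' r T'" using ib sg' cg' vp' rV unfolding identifies_bridges_def T'_def V'_def by blast
  hence "node_output P V' E' nbr' r T' x 0 \<noteq> None" unfolding correctly_classified_def V'_def using deg_x by auto
  moreover have "fst (exec P V E nbr r T') x = None" using awake_in_V[OF rV] xV by blast
  ultimately show False unfolding node_output_def simT' by simp
qed

end

lemma edge_msg:
  assumes ib: "identifies_bridges P"
    and sg: "simple_graph V E" and cg: "connected_graph V E" and vp: "valid_ports V E nbr" and r: "r \<in> V"
    and e: "e \<in> E"
  shows "\<exists>t\<le>term_time P V E nbr r. \<exists>w q. w \<in> V \<and> q < deg E w \<and>
           snd (exec P V E nbr r t) w q \<noteq> None \<and> e = {w, nbr w q}"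
proof (rule ccontr)
  assume nq: "\<not> ?thesis"
  define T where "T = term_time P V E nbr r"
  have "\<exists>t. terminated P V E nbr r t" using ib sg cg vp r unfolding identifies_bridges_def by blast
  hence trm: "terminated P V E nbr r T" unfolding T_def term_time_def by (rule LeastI_ex)
  obtain a b where abe: "e = {a, b}" "a \<noteq> b" "a \<in> V" "b \<in> V" using sg e unfolding simple_graph_def by blast
  have abE: "{a, b} \<in> E" using e abe by simp
  obtain pa where pa: "pa < deg E a" "nbr a pa = b"
    using vp abe abE unfolding valid_ports_def bij_betw_def
    by (metis (no_types, lifting) imageE lessThan_iff mem_Collect_eq)
  have baE: "{b, a} \<in> E" using abE by (simp add: insert_commute)
  obtain pb where pb: "pb < deg E b" "nbr b pb = a"
    using vp abe baE unfolding valid_ports_def bij_betw_def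
    by (metis (no_types, lifting) imageE lessThan_iff mem_Collect_eq)
  define x where "x = Suc (Max V)"
  have xV: "x \<notin> V"
  proof
    assume "x \<in> V"
    hence "x \<le> Max V" using sg unfolding simple_graph_def by simp
    then show False unfolding x_def by simp
  qed
  interpret subdiv P V E nbr r a b pa pb x
    by (rule subdiv.intro[OF sg cg vp r abE pa pb xV])
  have quiet: "snd (exec P V E nbr r t) a pa = None \<and> snd (exec P V E nbr r t) b pb = None" if "t \<le> T" for t
  proof -
    have "e = {a, nbr a pa}" using abe(1) pa(2) by simp
    moreover have "e = {b, nbr b pb}" using abe(1) pb(2) by (simp add: insert_commute)
    ultimately show ?thesis using nq that abe pa pb unfolding T_def by blast
  qed
  show False using no_quiet[OF ib T_def trm quiet] by blast
qed

lemma msg_bound: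
  assumes ib: "identifies_bridges P"
    and sg: "simple_graph V E" and cg: "connected_graph V E" and vp: "valid_ports V E nbr" and r: "r \<in> V"
  shows "card E \<le> msg_count P V E nbr r"
proof -
  define T where "T = term_time P V E nbr r"
  define M where "M = (\<lambda>t. {(w, q). w \<in> V \<and> q < deg E w \<and> snd (exec P V E nbr r t) w q \<noteq> None})"
  have finM: "finite (M t)" for t
  proof -
    have "M t \<subseteq> Sigma V (\<lambda>w. {..<deg E w})" unfolding M_def by auto
    moreover have "finite (Sigma V (\<lambda>w. {..<deg E w}))" using sg unfolding simple_graph_def by auto
    ultimately show ?thesis using finite_subset by blast
  qed
  have mc: "msg_count P V E nbr r = card (Sigma {..T} M)"
  proof -
    have "msgs_at P V E nbr r t = card (M t)" for t unfolding msgs_at_def M_def by simp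
    hence "msg_count P V E nbr r = (\<Sum>t\<le>T. card (M t))" unfolding msg_count_def T_def by simp
    also have "\<dots> = card (Sigma {..T} M)" using finM by (simp add: card_SigmaI)
    finally show ?thesis .
  qed
  define f where "f = (\<lambda>e. SOME y. y \<in> Sigma {..T} M \<and> e = {fst (snd y), nbr (fst (snd y)) (snd (snd y))})"
  have fP: "f e \<in> Sigma {..T} M \<and> e = {fst (snd (f e)), nbr (fst (snd (f e))) (snd (snd (f e)))}" if eE: "e \<in> E" for e
  proof -
    obtain t w q where "t \<le> T" "w \<in> V" "q < deg E w" "snd (exec P V E nbr r t) w q \<noteq> None" "e = {w, nbr w q}"
      using edge_msg[OF ib sg cg vp r eE] unfolding T_def by blast
    hence "(t, w, q) \<in> Sigma {..T} M \<and> e = {fst (snd (t, w, q)), nbr (fst (snd (t, w, q))) (snd (snd (t, w, q)))}"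
      unfolding M_def by simp
    then show ?thesis unfolding f_def by (rule someI)
  qed
  have "inj_on f E"
  proof (rule inj_onI)
    fix e1 e2 assume "e1 \<in> E" "e2 \<in> E" "f e1 = f e2"
    then show "e1 = e2" using fP by metis
  qed
  moreover have "f ` E \<subseteq> Sigma {..T} M" using fP by blast
  moreover have "finite (Sigma {..T} M)" using finM by auto
  ultimately have "card E \<le> card (Sigma {..T} M)" by (rule card_inj_on_le)
  then show ?thesis using mc by simp
qed

theorem mainTheorem2:
  fixes P :: "('s, 'm) protocol"
  assumes "identifies_bridges P"
    and "simple_graph V E" and "connected_graph V E" and "valid_ports V E nbr" and "r \<in> V"
  shows "card E \<le> msg_count P V E nbr r \<and>
         real (diam V E) / 2 \<le> real (term_time P V E nbr r)"
  using msg_bound[OF assms] time_bound[OF assms] by simp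

end
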